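(* Let $m,T\in\mathbb{N}$, $A=(a_{i,t})\in\mathbb{R}^{m\times T}$ with $a_{i,T}\neq0$ for all $i$, $b\in\mathbb{R}^m$, $\lambda>1$ and $\beta>0$. Let $H_t=[-t\sqrt{2\log\lambda},t\sqrt{2\log\lambda}]^m$ for $t\in\{0,\dots,T\}$, let $\Gamma_t$ be a $\beta$-partition of $H_t$ with projection $p_t:H_t\to\Gamma_t$, let $Q_t(B\mid x)=\int\mathbb{1}_B(x+A_{\cdot,t+1}y)\frac{1}{\sqrt{2\pi}}e^{-y^2/2}dy$, and define $\hat Q_t(y\mid x)=Q_t(p_{t+1}^{-1}(y)\mid x)$ for $x\in\Gamma_t,y\in\Gamma_{t+1}$. Define $\hat J_T(x)=g_{\lambda,b}(x)$ for $x\in\Gamma_T$ and $\hat J_t(x)=\sum_{y\in\Gamma_{t+1}}\hat J_{t+1}(y)\hat Q_t(y\mid x)$ for $x\in\Gamma_t$, $t=T-1,\dots,0$. Then with $x_0=0\in\mathbb{R}^m$ (note $\Gamma_0=H_0=\{0\}$) and $\mathcal{P}=\{x\in\mathbb{R}^T:Ax<b\}$, $$\Big|\int_{\mathcal{P}}\phi(x)\,dx-\hat J_0(x_0)\Big|\le\frac{2m}{\lambda\min_i|a_{i,T}|}+\frac{\sqrt2\,mT\max_{i,t}|a_{i,t}|}{\sqrt{\log\lambda}}\Big(\frac1\lambda\Big)^{1/\max_{i,t}a_{i,t}^2}+2m\lambda\beta(T+1),$$ where $\phi$ is the standard normal density on $\mathbb{R}^T$.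
   Context: $A_{\cdot,t+1}$ is the $(t+1)$-st column of $A$; inequalities between vectors are componentwise. For a compact metric space $H$, a finite set $\Gamma=\{x_1,\dots,x_n\}$ is a $\beta$-partition if there are disjoint sets $X_1,\dots,X_n$ with $\bigcup X_i=H$, $x_i\in X_i$, and $\|x-x_i\|_2\le\beta$ for all $x\in X_i$; the projection $p:H\to\Gamma$ is $p(x)=x_i$ for $x\in X_i$, and $p^{-1}(y)$ is the preimage. The smoothed indicator is $g_{\lambda,b}(x)=\prod_{i=1}^m g_i(x)$ with $g_i(x)=1$ if $x_i\le b_i-1/\lambda$, $g_i(x)=-\lambda(x_i-b_i)$ if $b_i-1/\lambda<x_i<b_i$, $g_i(x)=0$ if $x_i\ge b_i$. *)

theory Defs
  imports "HOL-Analysis.Analysis" "HOL-Probability.Probability"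
begin

text \<open>Vectors in R^m are modelled as real^'m (so m = CARD('m)); the matrix A is a
function A i t with row index i :: 'm and 0-based column index t < T, i.e. the
paper's column t+1 is A i t and the paper's a_{i,T} is A i (T-1).\<close>

definition column :: "('m::finite \<Rightarrow> nat \<Rightarrow> real) \<Rightarrow> nat \<Rightarrow> real^'m" where
  "column A t = (\<chi> i. A i t)"

definition Hbox :: "real \<Rightarrow> nat \<Rightarrow> (real^'m::finite) set" where
  "Hbox lam t = {x. \<forall>i. \<bar>x $ i\<bar> \<le> real t * sqrt (2 * ln lam)}"

definition beta_partition ::
  "(real^'m::finite) set \<Rightarrow> real \<Rightarrow> (real^'m) set \<Rightarrow> (real^'m \<Rightarrow> (real^'m) set) \<Rightarrow> bool" where
  "beta_partition H beta Gam X \<longleftrightarrow>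
     finite Gam \<and>
     (\<forall>y\<in>Gam. y \<in> X y) \<and>
     (\<forall>y\<in>Gam. \<forall>z\<in>Gam. y \<noteq> z \<longrightarrow> X y \<inter> X z = {}) \<and>
     (\<Union>y\<in>Gam. X y) = H \<and>
     (\<forall>y\<in>Gam. \<forall>x\<in>X y. norm (x - y) \<le> beta)"

definition partition_proj ::
  "(real^'m::finite) set \<Rightarrow> (real^'m \<Rightarrow> (real^'m) set) \<Rightarrow> real^'m \<Rightarrow> real^'m" where
  "partition_proj Gam X x = (THE y. y \<in> Gam \<and> x \<in> X y)"

definition proj_preimage ::
  "(real^'m::finite) set \<Rightarrow> (real^'m) set \<Rightarrow> (real^'m \<Rightarrow> (real^'m) set) \<Rightarrow> real^'m \<Rightarrow> (real^'m) set" where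
  "proj_preimage H Gam X y = {x \<in> H. partition_proj Gam X x = y}"

definition Qker :: "('m::finite \<Rightarrow> nat \<Rightarrow> real) \<Rightarrow> nat \<Rightarrow> (real^'m) set \<Rightarrow> real^'m \<Rightarrow> real" where
  "Qker A t B x = (\<integral>y. indicator B (x + y *\<^sub>R column A t) * std_normal_density y \<partial>lborel)"

definition gcomp :: "real \<Rightarrow> real \<Rightarrow> real \<Rightarrow> real" where
  "gcomp lam bi xi =
     (if xi \<le> bi - 1 / lam then 1 else if xi < bi then - lam * (xi - bi) else 0)"

definition gsmooth :: "real \<Rightarrow> real^'m::finite \<Rightarrow> real^'m \<Rightarrow> real" where
  "gsmooth lam b x = (\<Prod>i\<in>UNIV. gcomp lam (b $ i) (x $ i))"

definition std_normal_density_T :: "nat \<Rightarrow> (nat \<Rightarrow> real) \<Rightarrow> real" where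
  "std_normal_density_T T x = (\<Prod>t<T. std_normal_density (x t))"

definition polyhedron :: "('m::finite \<Rightarrow> nat \<Rightarrow> real) \<Rightarrow> real^'m \<Rightarrow> nat \<Rightarrow> (nat \<Rightarrow> real) set" where
  "polyhedron A b T = {x. \<forall>i. (\<Sum>t<T. A i t * x t) < b $ i}"

end

theory Submission
  imports Defs
begin

definition Kop :: "real^'m::finite \<Rightarrow> (real^'m \<Rightarrow> real) \<Rightarrow> real^'m \<Rightarrow> real" where
  "Kop a h x = (\<integral>s. h (x + s *\<^sub>R a) * std_normal_density s \<partial>lborel)"

lemma abs_int_le: "\<bar>integral\<^sup>L M (f::_ \<Rightarrow> real)\<bar> \<le> (\<integral>x. norm (f x) \<partial>M)"
  using integral_norm_bound[of M f] by simp

lemma meas_shift[measurable]: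
  fixes h :: "real^'m::finite \<Rightarrow> real"
  assumes [measurable]: "h \<in> borel_measurable borel"
  shows "(\<lambda>s. h (x + s *\<^sub>R a)) \<in> borel_measurable lborel"
  by measurable

lemma Kop_integrable:
  fixes h :: "real^'m::finite \<Rightarrow> real"
  assumes [measurable]: "h \<in> borel_measurable borel" and hb: "\<And>z. \<bar>h z\<bar> \<le> C"
  shows "integrable lborel (\<lambda>s. h (x + s *\<^sub>R a) * std_normal_density s)"
proof (rule Bochner_Integration.integrable_bound[of _ "\<lambda>s. C * std_normal_density s"])
  show "integrable lborel (\<lambda>s. C * std_normal_density s)" by simp
  show "(\<lambda>s. h (x + s *\<^sub>R a) * std_normal_density s) \<in> borel_measurable lborel" by measurable
  show "AE s in lborel. norm (h (x + s *\<^sub>R a) * std_normal_density s) \<le> norm (C * std_normal_density s)"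
  proof (intro AE_I2)
    fix s
    have "norm (h (x + s *\<^sub>R a) * std_normal_density s) = \<bar>h (x + s *\<^sub>R a)\<bar> * std_normal_density s"
      by (simp add: abs_mult)
    also have "\<dots> \<le> C * std_normal_density s" by (rule mult_right_mono[OF hb]) simp
    also have "\<dots> \<le> norm (C * std_normal_density s)" by simp
    finally show "norm (h (x + s *\<^sub>R a) * std_normal_density s) \<le> norm (C * std_normal_density s)" .
  qed
qed

lemma Kop_bound:
  fixes h :: "real^'m::finite \<Rightarrow> real"
  assumes [measurable]: "h \<in> borel_measurable borel" and hb: "\<And>z. \<bar>h z\<bar> \<le> C"
  shows "\<bar>Kop a h x\<bar> \<le> C"
proof -
  have "\<bar>Kop a h x\<bar> \<le> (\<integral>s. norm (h (x + s *\<^sub>R a) * std_normal_density s) \<partial>lborel)"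
    unfolding Kop_def by (rule abs_int_le)
  also have "\<dots> \<le> (\<integral>s. C * std_normal_density s \<partial>lborel)"
  proof (rule integral_mono)
    show "integrable lborel (\<lambda>s. norm (h (x + s *\<^sub>R a) * std_normal_density s))"
      by (rule integrable_norm[OF Kop_integrable[OF assms]])
    show "integrable lborel (\<lambda>s. C * std_normal_density s)" by simp
    fix s show "norm (h (x + s *\<^sub>R a) * std_normal_density s) \<le> C * std_normal_density s"
      using hb[of "x + s *\<^sub>R a"] by (simp add: abs_mult mult_right_mono)
  qed
  also have "\<dots> = C" by simp
  finally show ?thesis .
qed

lemma Kop_nonneg:
  fixes h :: "real^'m::finite \<Rightarrow> real"
  assumes [measurable]: "h \<in> borel_measurable borel" and hb: "\<And>z. 0 \<le> h z"
  shows "0 \<le> Kop a h x"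
  unfolding Kop_def using hb by (auto intro!: integral_nonneg_AE)

lemma Kop_diff:
  fixes h u :: "real^'m::finite \<Rightarrow> real"
  assumes [measurable]: "h \<in> borel_measurable borel" "u \<in> borel_measurable borel"
    and "\<And>z. \<bar>h z\<bar> \<le> C" "\<And>z. \<bar>u z\<bar> \<le> D"
  shows "Kop a h x - Kop a u x = Kop a (\<lambda>z. h z - u z) x"
  unfolding Kop_def
  using Kop_integrable[OF assms(1,3)] Kop_integrable[OF assms(2,4)]
  by (subst Bochner_Integration.integral_diff[symmetric]) (auto simp: algebra_simps)

lemma Kop_measurable[measurable]:
  fixes h :: "real^'m::finite \<Rightarrow> real"
  assumes [measurable]: "h \<in> borel_measurable borel"
  shows "Kop a h \<in> borel_measurable borel"
proof -
  have "(\<lambda>x. \<integral>s. h (x + s *\<^sub>R a) * std_normal_density s \<partial>lborel) \<in> borel_measurable borel"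
  proof (rule lborel.borel_measurable_lebesgue_integral)
    have c: "(\<lambda>p. (fst p + snd p *\<^sub>R a)::real^'m) \<in> borel_measurable (borel \<Otimes>\<^sub>M lborel)"
      by measurable
    show "(\<lambda>(x, s). h (x + s *\<^sub>R a) * std_normal_density s) \<in> borel_measurable (borel \<Otimes>\<^sub>M lborel)"
      using c by (simp add: case_prod_beta') measurable
  qed
  then show ?thesis unfolding Kop_def[abs_def] .
qed

lemma Kop_lip:
  fixes h :: "real^'m::finite \<Rightarrow> real"
  assumes [measurable]: "h \<in> borel_measurable borel" and hb: "\<And>z. \<bar>h z\<bar> \<le> C"
    and hl: "\<And>u v. \<bar>h u - h v\<bar> \<le> L * norm (u - v)"
  shows "\<bar>Kop a h u - Kop a h v\<bar> \<le> L * norm (u - v)"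
proof -
  define d where "d = u - v"
  have m2[measurable]: "(\<lambda>z. h (z + d)) \<in> borel_measurable borel" by measurable
  have "Kop a h u = Kop a (\<lambda>z. h (z + d)) v"
    unfolding Kop_def d_def by (simp add: algebra_simps)
  then have "Kop a h u - Kop a h v = Kop a (\<lambda>z. h (z + d) - h z) v"
    using Kop_diff[OF m2 assms(1) hb hb] by simp
  also have "\<bar>\<dots>\<bar> \<le> L * norm d"
  proof (rule Kop_bound)
    show "(\<lambda>z. h (z + d) - h z) \<in> borel_measurable borel" by measurable
  next
    fix z show "\<bar>h (z + d) - h z\<bar> \<le> L * norm d" using hl[of "z + d" z] by simp
  qed
  finally show ?thesis by (simp add: d_def)
qed

fun Kr :: "(nat \<Rightarrow> real^'m::finite) \<Rightarrow> nat \<Rightarrow> nat \<Rightarrow> (real^'m \<Rightarrow> real) \<Rightarrow> real^'m \<Rightarrow> real" where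
  "Kr a s 0 h = h"
| "Kr a s (Suc n) h = Kop (a s) (Kr a (Suc s) n h)"

lemma Kr_swap: "Kr a s (Suc n) h = Kr a s n (Kop (a (s + n)) h)"
  by (induction n arbitrary: s) auto

lemma Kr_props:
  fixes h :: "real^'m::finite \<Rightarrow> real"
  assumes [measurable]: "h \<in> borel_measurable borel" and hb: "\<And>z. \<bar>h z\<bar> \<le> C"
  shows "Kr a s n h \<in> borel_measurable borel \<and> (\<forall>z. \<bar>Kr a s n h z\<bar> \<le> C)"
  using assms
proof (induction n arbitrary: s)
  case 0 then show ?case by simp
next
  case (Suc n)
  then have m[measurable]: "Kr a (Suc s) n h \<in> borel_measurable borel"
    and b: "\<And>z. \<bar>Kr a (Suc s) n h z\<bar> \<le> C" by auto
  show ?case using Kop_bound[OF m b] by simp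
qed

lemma Kr_nonneg:
  fixes h :: "real^'m::finite \<Rightarrow> real"
  assumes [measurable]: "h \<in> borel_measurable borel" and hb: "\<And>z. \<bar>h z\<bar> \<le> C"
    and hn: "\<And>z. 0 \<le> h z"
  shows "0 \<le> Kr a s n h z"
  using hn
proof (induction n arbitrary: s z)
  case 0 then show ?case by simp
next
  case (Suc n)
  have m[measurable]: "Kr a (Suc s) n h \<in> borel_measurable borel"
    using Kr_props[OF assms(1,2)] by blast
  show ?case using Kop_nonneg[OF m] Suc by simp
qed

lemma Kr_lip:
  fixes h :: "real^'m::finite \<Rightarrow> real"
  assumes [measurable]: "h \<in> borel_measurable borel" and hb: "\<And>z. \<bar>h z\<bar> \<le> C"
    and hl: "\<And>u v. \<bar>h u - h v\<bar> \<le> L * norm (u - v)"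
  shows "\<bar>Kr a s n h u - Kr a s n h v\<bar> \<le> L * norm (u - v)"
  using hl
proof (induction n arbitrary: s u v)
  case 0 then show ?case by simp
next
  case (Suc n)
  have m[measurable]: "Kr a (Suc s) n h \<in> borel_measurable borel"
    and b: "\<And>z. \<bar>Kr a (Suc s) n h z\<bar> \<le> C"
    using Kr_props[OF assms(1,2)] by blast+
  show ?case using Kop_lip[OF m b Suc.IH[OF Suc.prems]] by simp
qed

lemma Kr_diffbound:
  fixes h u :: "real^'m::finite \<Rightarrow> real"
  assumes [measurable]: "h \<in> borel_measurable borel" "u \<in> borel_measurable borel"
    and hb: "\<And>z. \<bar>h z\<bar> \<le> C" and ub: "\<And>z. \<bar>u z\<bar> \<le> D"
    and e: "\<And>z. \<bar>h z - u z\<bar> \<le> eps"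
  shows "\<bar>Kr a s n h x - Kr a s n u x\<bar> \<le> eps"
  using e
proof (induction n arbitrary: s x)
  case 0 then show ?case by simp
next
  case (Suc n)
  have m1[measurable]: "Kr a (Suc s) n h \<in> borel_measurable borel"
    and b1: "\<And>z. \<bar>Kr a (Suc s) n h z\<bar> \<le> C"
    using Kr_props[OF assms(1) hb] by blast+
  have m2[measurable]: "Kr a (Suc s) n u \<in> borel_measurable borel"
    and b2: "\<And>z. \<bar>Kr a (Suc s) n u z\<bar> \<le> D"
    using Kr_props[OF assms(2) ub] by blast+
  have "Kr a s (Suc n) h x - Kr a s (Suc n) u x
      = Kop (a s) (\<lambda>z. Kr a (Suc s) n h z - Kr a (Suc s) n u z) x"
    using Kop_diff[OF m1 m2 b1 b2] by simp
  also have "\<bar>\<dots>\<bar> \<le> eps"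
    by (rule Kop_bound) (use Suc in auto)
  finally show ?case .
qed

lemma psf_lborel: "product_sigma_finite (\<lambda>_::nat. lborel :: real measure)"
  unfolding product_sigma_finite_def by (simp add: lborel.sigma_finite_measure_axioms)

lemma G_lemma:
  fixes h :: "real^'m::finite \<Rightarrow> real" and a :: "nat \<Rightarrow> real^'m"
  assumes [measurable]: "h \<in> borel_measurable borel" and hb: "\<And>z. \<bar>h z\<bar> \<le> C"
  shows "(\<integral>y. h (x + (\<Sum>t<k. y t *\<^sub>R a t)) * (\<Prod>t<k. std_normal_density (y t))
            \<partial>PiM {..<k} (\<lambda>_. lborel)) = Kr a 0 k h x"
  using assms
proof (induction k arbitrary: h x C)
  case 0
  then show ?case by (simp add: PiM_empty lebesgue_integral_count_space_finite)
next
  case (Suc k)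
  note hm[measurable] = Suc.prems(1)
  interpret product_sigma_finite "\<lambda>_::nat. lborel :: real measure" by (rule psf_lborel)
  let ?F = "\<lambda>y. h (x + (\<Sum>t<Suc k. y t *\<^sub>R a t)) * (\<Prod>t<Suc k. std_normal_density (y t))"
  have intP: "integrable (PiM {..<Suc k} (\<lambda>_. lborel)) (\<lambda>y. C * (\<Prod>t<Suc k. std_normal_density (y t)))"
    by (intro integrable_mult_right product_integrable_prod) auto
  have intF: "integrable (PiM {..<Suc k} (\<lambda>_. lborel)) ?F"
  proof (rule Bochner_Integration.integrable_bound[OF intP])
    show "?F \<in> borel_measurable (PiM {..<Suc k} (\<lambda>_. lborel))" by measurable
    show "AE y in PiM {..<Suc k} (\<lambda>_. lborel). norm (?F y) \<le> norm (C * (\<Prod>t<Suc k. std_normal_density (y t)))"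
    proof (intro AE_I2)
      fix y
      have p: "0 \<le> (\<Prod>t<Suc k. std_normal_density (y t))" by (intro prod_nonneg) auto
      have "norm (?F y) = \<bar>h (x + (\<Sum>t<Suc k. y t *\<^sub>R a t))\<bar> * (\<Prod>t<Suc k. std_normal_density (y t))"
        by (simp only: real_norm_def abs_mult abs_of_nonneg[OF p])
      also have "\<dots> \<le> C * (\<Prod>t<Suc k. std_normal_density (y t))"
        by (rule mult_right_mono[OF Suc.prems(2) p])
      also have "\<dots> \<le> norm (C * (\<Prod>t<Suc k. std_normal_density (y t)))" by simp
      finally show "norm (?F y) \<le> norm (C * (\<Prod>t<Suc k. std_normal_density (y t)))" .
    qed
  qed
  have ins: "{..<Suc k} = insert k {..<k}" by auto
  have "integral\<^sup>L (PiM {..<Suc k} (\<lambda>_. lborel)) ?F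
      = (\<integral>y. (\<integral>z. ?F (y(k := z)) \<partial>lborel) \<partial>PiM {..<k} (\<lambda>_. lborel))"
    using product_integral_insert[of "{..<k}" k ?F] intF unfolding ins by simp
  also have "\<dots> = (\<integral>y. Kop (a k) h (x + (\<Sum>t<k. y t *\<^sub>R a t)) * (\<Prod>t<k. std_normal_density (y t))
                     \<partial>PiM {..<k} (\<lambda>_. lborel))"
  proof (rule Bochner_Integration.integral_cong[OF refl])
    fix y
    have s1: "(\<Sum>t<k. (y(k := z)) t *\<^sub>R a t) = (\<Sum>t<k. y t *\<^sub>R a t)" for z
      by (rule sum.cong) auto
    have p1: "(\<Prod>t<k. std_normal_density ((y(k := z)) t)) = (\<Prod>t<k. std_normal_density (y t))" for z
      by (rule prod.cong) auto
    have eqF: "?F (y(k := z)) = (\<Prod>t<k. std_normal_density (y t)) *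
            (h ((x + (\<Sum>t<k. y t *\<^sub>R a t)) + z *\<^sub>R a k) * std_normal_density z)" for z
      using s1[of z] p1[of z] by (simp add: algebra_simps)
    have "(\<integral>z. ?F (y(k := z)) \<partial>lborel) = (\<integral>z. (\<Prod>t<k. std_normal_density (y t)) *
            (h ((x + (\<Sum>t<k. y t *\<^sub>R a t)) + z *\<^sub>R a k) * std_normal_density z) \<partial>lborel)"
      by (intro Bochner_Integration.integral_cong refl eqF)
    also have "\<dots> = (\<Prod>t<k. std_normal_density (y t)) * Kop (a k) h (x + (\<Sum>t<k. y t *\<^sub>R a t))"
      unfolding Kop_def by (rule integral_mult_right_zero)
    finally show "(\<integral>z. ?F (y(k := z)) \<partial>lborel) = Kop (a k) h (x + (\<Sum>t<k. y t *\<^sub>R a t)) * (\<Prod>t<k. std_normal_density (y t))"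
      by (simp only: mult.commute)
  qed
  also have "\<dots> = Kr a 0 k (Kop (a k) h) x"
  proof -
    have m': "Kop (a k) h \<in> borel_measurable borel" by (rule Kop_measurable[OF hm])
    have b': "\<And>z. \<bar>Kop (a k) h z\<bar> \<le> C" by (rule Kop_bound[OF hm Suc.prems(2)])
    show ?thesis by (rule Suc.IH[OF m' b'])
  qed
  also have "\<dots> = Kr a 0 (Suc k) h x"
    using Kr_swap[of a 0 k h] by simp
  finally show ?case .
qed

lemma gcomp_clamp: "lam > 0 \<Longrightarrow> gcomp lam bi xi = max 0 (min 1 (lam * (bi - xi)))"
proof -
  assume l: "lam > 0"
  consider "xi \<le> bi - 1 / lam" | "bi - 1/lam < xi" "xi < bi" | "xi \<ge> bi" by linarith
  then show ?thesis
  proof cases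
    case 1
    then have "1 \<le> lam * (bi - xi)" using l by (simp add: field_simps)
    then show ?thesis using 1 by (simp add: gcomp_def)
  next
    case 2
    then have "lam * (bi - xi) < 1" using l by (simp add: field_simps)
    moreover have "0 < lam * (bi - xi)" using 2 l by simp
    ultimately show ?thesis using 2 by (simp add: gcomp_def algebra_simps)
  next
    case 3
    then have "lam * (bi - xi) \<le> 0" using l by (simp add: mult_nonneg_nonpos)
    moreover have "0 < 1/lam" using l by simp
    then have "\<not> xi \<le> bi - 1/lam" using 3 by linarith
    ultimately show ?thesis using 3 by (simp add: gcomp_def)
  qed
qed

lemma clamp_lip: "\<bar>max 0 (min 1 p) - max 0 (min 1 q)\<bar> \<le> \<bar>p - (q::real)\<bar>"
  by (simp add: max_def min_def abs_if)

lemma gcomp_range: "lam > 0 \<Longrightarrow> 0 \<le> gcomp lam bi xi \<and> gcomp lam bi xi \<le> 1"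
  by (simp add: gcomp_clamp)

lemma gcomp_lip: "lam > 0 \<Longrightarrow> \<bar>gcomp lam bi u - gcomp lam bi v\<bar> \<le> lam * \<bar>u - v\<bar>"
proof -
  assume l: "lam > 0"
  have "\<bar>gcomp lam bi u - gcomp lam bi v\<bar> \<le> \<bar>lam * (bi - u) - lam * (bi - v)\<bar>"
    using clamp_lip l by (simp add: gcomp_clamp)
  also have "\<dots> = lam * \<bar>u - v\<bar>" using l by (simp add: right_diff_distrib[symmetric] abs_mult)
  finally show ?thesis .
qed

lemma prod_diff_le:
  fixes f g :: "'a \<Rightarrow> real"
  assumes "finite I" "\<And>i. i \<in> I \<Longrightarrow> 0 \<le> f i \<and> f i \<le> 1 \<and> 0 \<le> g i \<and> g i \<le> 1"
  shows "\<bar>prod f I - prod g I\<bar> \<le> (\<Sum>i\<in>I. \<bar>f i - g i\<bar>)"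
  using assms
proof (induction I rule: finite_induct)
  case empty then show ?case by simp
next
  case (insert i I)
  have F: "0 \<le> prod f I" "prod f I \<le> 1" using insert by (auto intro: prod_nonneg prod_le_1)
  have G: "0 \<le> prod g I" "prod g I \<le> 1" using insert by (auto intro: prod_nonneg prod_le_1)
  have fi: "0 \<le> f i" "f i \<le> 1" "0 \<le> g i" "g i \<le> 1" using insert by auto
  have eqf: "f i * prod f I - g i * prod g I = (f i - g i) * prod f I + g i * (prod f I - prod g I)"
    by (simp add: algebra_simps)
  have "\<bar>f i * prod f I - g i * prod g I\<bar> \<le> \<bar>f i - g i\<bar> * prod f I + g i * \<bar>prod f I - prod g I\<bar>"
  proof -
    have "\<bar>(f i - g i) * prod f I + g i * (prod f I - prod g I)\<bar> \<le> \<bar>(f i - g i) * prod f I\<bar> + \<bar>g i * (prod f I - prod g I)\<bar>"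
      by (rule abs_triangle_ineq)
    also have "\<dots> = \<bar>f i - g i\<bar> * prod f I + g i * \<bar>prod f I - prod g I\<bar>"
      using F fi by (simp add: abs_mult)
    finally show ?thesis using eqf by simp
  qed
  also have "\<dots> \<le> \<bar>f i - g i\<bar> + \<bar>prod f I - prod g I\<bar>"
    using F fi by (intro add_mono mult_left_le mult_left_le_one_le) auto
  also have "\<dots> \<le> \<bar>f i - g i\<bar> + (\<Sum>i\<in>I. \<bar>f i - g i\<bar>)" using insert by simp
  finally show ?case using insert by simp
qed

lemma gsmooth_eq: "lam > 0 \<Longrightarrow> gsmooth lam b = (\<lambda>x. \<Prod>i\<in>UNIV. max 0 (min 1 (lam * (b $ i - x $ i))))"
  by (simp add: gsmooth_def gcomp_clamp fun_eq_iff)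

lemma gsmooth_meas: "lam > 0 \<Longrightarrow> gsmooth lam (b::real^'m::finite) \<in> borel_measurable borel"
  by (simp add: gsmooth_eq) measurable

lemma gsmooth_range: "lam > 0 \<Longrightarrow> 0 \<le> gsmooth lam b x \<and> gsmooth lam b x \<le> 1"
  by (simp add: gsmooth_def gcomp_range prod_nonneg prod_le_1)

lemma gsmooth_lip:
  fixes b :: "real^'m::finite"
  assumes l: "lam > 0"
  shows "\<bar>gsmooth lam b u - gsmooth lam b v\<bar> \<le> (lam * real CARD('m)) * norm (u - v)"
proof -
  have "\<bar>gsmooth lam b u - gsmooth lam b v\<bar> \<le> (\<Sum>i\<in>UNIV. \<bar>gcomp lam (b$i) (u$i) - gcomp lam (b$i) (v$i)\<bar>)"
    unfolding gsmooth_def by (rule prod_diff_le) (auto simp: gcomp_range l)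
  also have "\<dots> \<le> (\<Sum>i\<in>(UNIV::'m set). lam * norm (u - v))"
  proof (rule sum_mono)
    fix i :: 'm
    have "\<bar>gcomp lam (b$i) (u$i) - gcomp lam (b$i) (v$i)\<bar> \<le> lam * \<bar>u$i - v$i\<bar>" by (rule gcomp_lip[OF l])
    also have "\<dots> \<le> lam * norm (u - v)"
      using component_le_norm_cart[of "u - v" i] l by (intro mult_left_mono) auto
    finally show "\<bar>gcomp lam (b$i) (u$i) - gcomp lam (b$i) (v$i)\<bar> \<le> lam * norm (u - v)" .
  qed
  also have "\<dots> = (lam * real CARD('m)) * norm (u - v)" by simp
  finally show ?thesis .
qed

lemma snd_shift: "std_normal_density (r + v) \<le> std_normal_density r * exp (- (r * v))" if "0 \<le> v"
proof -
  have "exp (- (r + v)\<^sup>2 / 2) = exp (- r\<^sup>2 / 2) * exp (- (r * v)) * exp (- v\<^sup>2 / 2)"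
    by (simp add: exp_add[symmetric] power2_eq_square algebra_simps add_divide_distrib diff_divide_distrib)
  also have "\<dots> \<le> exp (- r\<^sup>2 / 2) * exp (- (r * v))" by simp
  finally show ?thesis unfolding std_normal_density_def by (simp add: divide_right_mono)
qed

lemma tail_nn:
  assumes r: "r > 0"
  shows "(\<integral>\<^sup>+s. ennreal (indicator {r<..} s * std_normal_density s) \<partial>lborel) \<le> ennreal (std_normal_density r / r)"
proof -
  have "(\<integral>\<^sup>+s. ennreal (indicator {r<..} s * std_normal_density s) \<partial>lborel)
      = (\<integral>\<^sup>+v. ennreal (indicator {r<..} (r + 1 * v) * std_normal_density (r + 1 * v)) \<partial>lborel)"
    by (subst nn_integral_real_affine[where c=1 and t=r]) auto
  also have "\<dots> \<le> (\<integral>\<^sup>+v. ennreal (std_normal_density r) * ennreal (exp (- (r * v)) * indicator {0..} v) \<partial>lborel)"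
  proof (rule nn_integral_mono)
    fix v :: real
    show "ennreal (indicator {r<..} (r + 1 * v) * std_normal_density (r + 1 * v))
          \<le> ennreal (std_normal_density r) * ennreal (exp (- (r * v)) * indicator {0..} v)"
    proof (cases "0 < v")
      case True
      then show ?thesis using snd_shift[of v r]
        by (simp add: ennreal_mult[symmetric] indicator_def)
    next
      case False
      then show ?thesis by (simp add: indicator_def)
    qed
  qed
  also have "\<dots> = ennreal (std_normal_density r) * (\<integral>\<^sup>+v. ennreal (exp (- (r * v)) * indicator {0..} v) \<partial>lborel)"
    by (rule nn_integral_cmult) auto
  also have "(\<integral>\<^sup>+v. ennreal (exp (- (r * v)) * indicator {0..} v) \<partial>lborel)
      = ennreal (1/r) * (\<integral>\<^sup>+v. ennreal (exp (- (r * (0 + (1/r) * v))) * indicator {0..} (0 + (1/r) * v)) \<partial>lborel)"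
    using r by (subst nn_integral_real_affine[where c="1/r" and t=0]) auto
  also have "(\<integral>\<^sup>+v. ennreal (exp (- (r * (0 + (1/r) * v))) * indicator {0..} (0 + (1/r) * v)) \<partial>lborel)
      = (\<integral>\<^sup>+x. ennreal (x^0 * exp (-x)) * indicator {0 ..} x \<partial>lborel)"
    using r by (intro nn_integral_cong) (auto simp: indicator_def zero_le_divide_iff)
  also have "\<dots> = 1" by (subst nn_intergal_power_times_exp_Ici) simp
  finally show ?thesis using r by (simp add: ennreal_mult[symmetric] divide_nonneg_pos)
qed

lemma phi_le1: "std_normal_density s \<le> 1"
proof -
  have e: "exp (- s\<^sup>2 / 2) \<le> 1" by simp
  have "1 \<le> sqrt (2 * pi)" using pi_gt3 by (intro real_le_rsqrt) simp
  then have q: "1 / sqrt (2 * pi) \<le> 1" by simp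
  show ?thesis unfolding std_normal_density_def
    by (rule mult_le_one[OF q _ e]) simp_all
qed

lemma int_le_phi:
  assumes [measurable]: "f \<in> borel_measurable lborel" and b: "\<And>s. \<bar>f s\<bar> \<le> std_normal_density s"
  shows "integrable lborel f"
  by (rule Bochner_Integration.integrable_bound[of _ "std_normal_density"]) (use b in auto)

lemma nn_to_real:
  assumes "integrable lborel f" "\<And>s. 0 \<le> f s"
    and "(\<integral>\<^sup>+s. ennreal (f s) \<partial>lborel) \<le> ennreal B" "0 \<le> B"
  shows "integral\<^sup>L lborel f \<le> B"
proof -
  have "ennreal (integral\<^sup>L lborel f) \<le> ennreal B"
    using assms nn_integral_eq_integral[of lborel f] by simp
  then show ?thesis using assms(4) by (simp add: ennreal_le_iff)
qed

lemma tail_real: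
  assumes r: "r > 0"
  shows "(\<integral>s. indicator {s. r < \<bar>s\<bar>} s * std_normal_density s \<partial>lborel) \<le> 2 * std_normal_density r / r"
proof (rule nn_to_real)
  show "integrable lborel (\<lambda>s. indicator {s. r < \<bar>s\<bar>} s * std_normal_density s)"
    by (rule int_le_phi) (auto simp: indicator_def)
  show "\<And>s. 0 \<le> indicator {s. r < \<bar>s\<bar>} s * std_normal_density s" by simp
  show "0 \<le> 2 * std_normal_density r / r" using r by simp
  have sym: "(\<integral>\<^sup>+s. ennreal (indicator {..< -r} s * std_normal_density s) \<partial>lborel)
      = (\<integral>\<^sup>+s. ennreal (indicator {r<..} s * std_normal_density s) \<partial>lborel)"
    by (subst nn_integral_real_affine[where c="-1" and t=0])
       (auto intro!: nn_integral_cong simp: indicator_def std_normal_density_def)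
  have "(\<integral>\<^sup>+s. ennreal (indicator {s. r < \<bar>s\<bar>} s * std_normal_density s) \<partial>lborel)
      = (\<integral>\<^sup>+s. ennreal (indicator {r<..} s * std_normal_density s) + ennreal (indicator {..< -r} s * std_normal_density s) \<partial>lborel)"
    using r by (intro nn_integral_cong) (auto simp: indicator_def)
  also have "\<dots> = (\<integral>\<^sup>+s. ennreal (indicator {r<..} s * std_normal_density s) \<partial>lborel) + (\<integral>\<^sup>+s. ennreal (indicator {..< -r} s * std_normal_density s) \<partial>lborel)"
    by (rule nn_integral_add) auto
  also have "\<dots> \<le> ennreal (std_normal_density r / r) + ennreal (std_normal_density r / r)"
    unfolding sym by (intro add_mono tail_nn r)
  also have "\<dots> = ennreal (2 * std_normal_density r / r)"
    using r by (simp add: ennreal_plus[symmetric] del: ennreal_plus)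
  finally show "(\<integral>\<^sup>+s. ennreal (indicator {s. r < \<bar>s\<bar>} s * std_normal_density s) \<partial>lborel) \<le> ennreal (2 * std_normal_density r / r)" .
qed

lemma strip_bound:
  assumes a: "a \<noteq> 0" and l: "lam > 0"
  shows "(\<integral>s. indicator {lo<..<lo + 1/lam} (z + s * a) * std_normal_density s \<partial>lborel) \<le> 1 / (lam * \<bar>a\<bar>)"
proof (rule nn_to_real)
  show "integrable lborel (\<lambda>s. indicator {lo<..<lo + 1/lam} (z + s * a) * std_normal_density s)"
    by (rule int_le_phi) (auto simp: indicator_def)
  show "\<And>s. 0 \<le> indicator {lo<..<lo + 1/lam} (z + s * a) * std_normal_density s" by simp
  show "0 \<le> 1 / (lam * \<bar>a\<bar>)" using l by simp
  have "(\<integral>\<^sup>+s. ennreal (indicator {lo<..<lo + 1/lam} (z + s * a) * std_normal_density s) \<partial>lborel)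
     \<le> (\<integral>\<^sup>+s. ennreal (indicator {lo<..<lo + 1/lam} (z + a * s)) \<partial>lborel)"
    by (intro nn_integral_mono) (auto simp: indicator_def phi_le1 mult.commute)
  also have "\<dots> = ennreal \<bar>1/a\<bar> * (\<integral>\<^sup>+u. ennreal (indicator {lo<..<lo + 1/lam} (z + a * (- z / a + (1/a) * u))) \<partial>lborel)"
    using a by (subst nn_integral_real_affine[where c="1/a" and t="-z/a"]) auto
  also have "(\<integral>\<^sup>+u. ennreal (indicator {lo<..<lo + 1/lam} (z + a * (- z / a + (1/a) * u))) \<partial>lborel)
      = (\<integral>\<^sup>+u. ennreal (indicator {lo<..<lo + 1/lam} u) \<partial>lborel)"
    using a by (intro nn_integral_cong) (simp add: field_simps)
  also have "\<dots> = ennreal (1/lam)" using l by (simp add: ennreal_indicator)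
  finally show "(\<integral>\<^sup>+s. ennreal (indicator {lo<..<lo + 1/lam} (z + s * a) * std_normal_density s) \<partial>lborel) \<le> ennreal (1 / (lam * \<bar>a\<bar>))"
    using a l by (simp add: ennreal_mult[symmetric] abs_divide) (simp add: mult.commute)
qed



lemma Kop_sum:
  fixes f :: "'i \<Rightarrow> real^'m::finite \<Rightarrow> real"
  assumes "finite I" and m: "\<And>i. i \<in> I \<Longrightarrow> f i \<in> borel_measurable borel"
    and b: "\<And>i z. i \<in> I \<Longrightarrow> \<bar>f i z\<bar> \<le> C i"
  shows "Kop a (\<lambda>w. \<Sum>i\<in>I. f i w) x = (\<Sum>i\<in>I. Kop a (f i) x)"
  unfolding Kop_def sum_distrib_right
  by (rule Bochner_Integration.integral_sum) (use Kop_integrable[OF m b] in auto)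

lemma Kop_cmult: "Kop a (\<lambda>w. c * f w) x = c * Kop a f x"
  unfolding Kop_def by (simp add: mult.assoc)

lemma Kop_le:
  fixes h B :: "real^'m::finite \<Rightarrow> real"
  assumes [measurable]: "h \<in> borel_measurable borel" "B \<in> borel_measurable borel"
    and hb: "\<And>z. \<bar>h z\<bar> \<le> C" and Bb: "\<And>z. \<bar>B z\<bar> \<le> D" and hB: "\<And>z. \<bar>h z\<bar> \<le> B z"
  shows "\<bar>Kop a h x\<bar> \<le> Kop a B x"
proof -
  have "\<bar>Kop a h x\<bar> \<le> (\<integral>s. norm (h (x + s *\<^sub>R a) * std_normal_density s) \<partial>lborel)"
    unfolding Kop_def by (rule abs_int_le)
  also have "\<dots> \<le> Kop a B x"
    unfolding Kop_def
  proof (rule integral_mono)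
    show "integrable lborel (\<lambda>s. norm (h (x + s *\<^sub>R a) * std_normal_density s))"
      by (rule integrable_norm[OF Kop_integrable[OF assms(1) hb]])
    show "integrable lborel (\<lambda>s. B (x + s *\<^sub>R a) * std_normal_density s)"
      by (rule Kop_integrable[OF assms(2) Bb])
    fix s show "norm (h (x + s *\<^sub>R a) * std_normal_density s) \<le> B (x + s *\<^sub>R a) * std_normal_density s"
      using hB[of "x + s *\<^sub>R a"] by (simp add: abs_mult mult_right_mono)
  qed
  finally show ?thesis .
qed

lemma h1_meas: "indicator {z::real^'m::finite. \<forall>i. z$i < b$i} \<in> borel_measurable borel"
proof -
  have "{z::real^'m. \<forall>i. z$i < b$i} = (\<Inter>i. {z. z$i < b$i})" by auto
  moreover have "open (\<Inter>i. {z::real^'m. z$i < b$i})"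
    by (intro open_INT) (auto simp: open_halfspace_component_lt_cart)
  ultimately have "{z::real^'m. \<forall>i. z$i < b$i} \<in> sets borel" by simp
  then show ?thesis by simp
qed

lemma smooth_pointwise:
  fixes b w :: "real^'m::finite"
  assumes l: "lam > 0"
  shows "\<bar>indicator {z. \<forall>i. z$i < b$i} w - gsmooth lam b w\<bar>
         \<le> (\<Sum>i\<in>UNIV. indicator {b$i - 1/lam<..<b$i} (w$i))"
proof -
  have Bnn: "0 \<le> (\<Sum>i\<in>UNIV. indicator {b$i - 1/lam<..<b$i} (w$i) :: real)" by (simp add: sum_nonneg)
  have il: "0 < 1/lam" using l by simp
  show ?thesis
  proof (cases "\<forall>i. w$i \<le> b$i - 1/lam")
    case True
    have "\<forall>i. w$i < b$i"
    proof
      fix i have "w$i \<le> b$i - 1/lam" using True by blast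
      then show "w$i < b$i" using il by linarith
    qed
    then have h: "indicator {z. \<forall>i. z$i < b$i} w = (1::real)" by simp
    have "gsmooth lam b w = 1" unfolding gsmooth_def gcomp_def using True by simp
    then show ?thesis using h Bnn by simp
  next
    case False
    then obtain i where i: "b$i - 1/lam < w$i" by (auto simp: not_le)
    show ?thesis
    proof (cases "\<exists>j. b$j \<le> w$j")
      case True
      then obtain j where j: "b$j \<le> w$j" by blast
      then have h: "indicator {z. \<forall>i. z$i < b$i} w = (0::real)" by (auto simp: indicator_def not_less)
      have "\<not> w$j \<le> b$j - 1/lam" using j il by linarith
      then have "gcomp lam (b$j) (w$j) = 0" unfolding gcomp_def using j by auto
      then have "gsmooth lam b w = 0" unfolding gsmooth_def
        by (intro prod_zero) auto
      then show ?thesis using h Bnn by simp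
    next
      case False
      then have "w$i < b$i" by (simp add: not_le)
      then have one: "indicator {b$i - 1/lam<..<b$i} (w$i) = (1::real)" using i by simp
      have "(1::real) \<le> (\<Sum>i\<in>UNIV. indicator {b$i - 1/lam<..<b$i} (w$i))"
        using member_le_sum[of i UNIV "\<lambda>i. indicator {b$i - 1/lam<..<b$i} (w$i) :: real"] one by simp
      moreover have "\<bar>indicator {z. \<forall>i. z$i < b$i} w - gsmooth lam b w\<bar> \<le> 1"
        using gsmooth_range[OF l, of b w] by (auto simp: indicator_def)
      ultimately show ?thesis by linarith
    qed
  qed
qed

lemma smooth_bound:
  fixes b a x :: "real^'m::finite"
  assumes l: "lam > 0" and anz: "\<And>i. a$i \<noteq> 0"
  shows "\<bar>Kop a (indicator {z. \<forall>i. z$i < b$i}) x - Kop a (gsmooth lam b) x\<bar>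
         \<le> real CARD('m) / (lam * Min (range (\<lambda>i. \<bar>a$i\<bar>)))"
proof -
  let ?h = "indicator {z::real^'m. \<forall>i. z$i < b$i} :: real^'m \<Rightarrow> real"
  let ?g = "gsmooth lam b"
  let ?B = "\<lambda>w::real^'m. \<Sum>i\<in>UNIV. indicator {b$i - 1/lam<..<b$i} (w$i) :: real"
  note hm[measurable] = h1_meas[of b]
  note gm[measurable] = gsmooth_meas[OF l, of b]
  have hb: "\<And>z. \<bar>?h z\<bar> \<le> 1" by (simp add: indicator_def)
  have gb: "\<bar>?g z\<bar> \<le> 1" for z using gsmooth_range[OF l, of b z] by (auto simp: abs_le_iff)
  have Bm[measurable]: "?B \<in> borel_measurable borel" by measurable
  have Bb: "\<And>z. \<bar>?B z\<bar> \<le> real CARD('m)"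
  proof -
    fix z
    have "\<bar>?B z\<bar> = ?B z" by (simp add: sum_nonneg)
    also have "\<dots> \<le> (\<Sum>i\<in>(UNIV::'m set). 1)" by (intro sum_mono) (simp add: indicator_def)
    finally show "\<bar>?B z\<bar> \<le> real CARD('m)" by simp
  qed
  have dm[measurable]: "(\<lambda>w. ?h w - ?g w) \<in> borel_measurable borel" by measurable
  have db: "\<bar>?h z - ?g z\<bar> \<le> 2" for z
    using abs_triangle_ineq4[of "?h z" "?g z"] hb[of z] gb[of z] by linarith
  have "Kop a ?h x - Kop a ?g x = Kop a (\<lambda>w. ?h w - ?g w) x"
    by (rule Kop_diff[OF hm gm hb gb])
  also have "\<bar>\<dots>\<bar> \<le> Kop a ?B x"
    by (rule Kop_le[OF dm Bm db Bb]) (rule smooth_pointwise[OF l])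
  also have "\<dots> = (\<Sum>i\<in>UNIV. Kop a (\<lambda>w. indicator {b$i - 1/lam<..<b$i} (w$i)) x)"
    by (rule Kop_sum[where C="\<lambda>_. 1"]) (auto simp: indicator_def)
  also have "\<dots> \<le> (\<Sum>i\<in>(UNIV::'m set). 1 / (lam * Min (range (\<lambda>i. \<bar>a$i\<bar>))))"
  proof (rule sum_mono)
    fix i :: 'm
    have mpos: "0 < Min (range (\<lambda>i. \<bar>a$i\<bar>))"
      using Min_in[of "range (\<lambda>i. \<bar>a$i\<bar>)"] anz by auto
    have mle: "Min (range (\<lambda>i. \<bar>a$i\<bar>)) \<le> \<bar>a$i\<bar>" by (rule Min_le) auto
    have eq: "b$i - 1/lam + 1/lam = b$i" by simp
    have "Kop a (\<lambda>w. indicator {b$i - 1/lam<..<b$i} (w$i)) x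
        = (\<integral>s. indicator {b$i - 1/lam<..<b$i - 1/lam + 1/lam} (x$i + s * a$i) * std_normal_density s \<partial>lborel)"
      unfolding Kop_def eq by simp
    also have "\<dots> \<le> 1 / (lam * \<bar>a$i\<bar>)" by (rule strip_bound[OF anz l])
    also have "\<dots> \<le> 1 / (lam * Min (range (\<lambda>i. \<bar>a$i\<bar>)))"
      using l mpos mle by (intro divide_left_mono mult_left_mono mult_pos_pos) auto
    finally show "Kop a (\<lambda>w. indicator {b$i - 1/lam<..<b$i} (w$i)) x \<le> 1 / (lam * Min (range (\<lambda>i. \<bar>a$i\<bar>)))" .
  qed
  also have "\<dots> = real CARD('m) / (lam * Min (range (\<lambda>i. \<bar>a$i\<bar>)))" by simp
  finally show ?thesis .
qed

lemma step_bound: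
  fixes a x :: "real^'m::finite" and Y H :: "(real^'m) set" and Cl :: "real^'m \<Rightarrow> (real^'m) set"
    and v j :: "real^'m \<Rightarrow> real"
  assumes fY: "finite Y"
    and disj: "\<forall>y\<in>Y. \<forall>y'\<in>Y. y \<noteq> y' \<longrightarrow> Cl y \<inter> Cl y' = {}"
    and cov: "(\<Union>y\<in>Y. Cl y) = H"
    and cm: "\<forall>y\<in>Y. Cl y \<in> sets borel"
    and diam: "\<forall>y\<in>Y. \<forall>w\<in>Cl y. norm (w - y) \<le> beta"
    and vm[measurable]: "v \<in> borel_measurable borel" and v01: "\<And>z. 0 \<le> v z \<and> v z \<le> 1"
    and vl: "\<And>u w. \<bar>v u - v w\<bar> \<le> L * norm (u - w)"
    and E: "\<forall>y\<in>Y. \<bar>v y - j y\<bar> \<le> E"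
    and nn: "0 \<le> L" "0 \<le> beta" "0 \<le> E"
    and out: "\<And>s. x + s *\<^sub>R a \<notin> H \<Longrightarrow> r < \<bar>s\<bar>"
    and tail: "(\<integral>s. indicator {s. r < \<bar>s\<bar>} s * std_normal_density s \<partial>lborel) \<le> tau"
  shows "\<bar>Kop a v x - (\<Sum>y\<in>Y. j y * Kop a (indicator (Cl y)) x)\<bar> \<le> L * beta + E + tau"
proof -
  let ?D = "\<lambda>w. \<Sum>y\<in>Y. j y * indicator (Cl y) w :: real"
  have im: "\<And>y. y \<in> Y \<Longrightarrow> (indicator (Cl y) :: _ \<Rightarrow> real) \<in> borel_measurable borel"
    using cm by simp
  have Dm: "?D \<in> borel_measurable borel"
    by (rule borel_measurable_sum, rule borel_measurable_times[OF borel_measurable_const im])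
  have Db: "\<And>w. \<bar>?D w\<bar> \<le> (\<Sum>y\<in>Y. \<bar>j y\<bar>)"
  proof -
    fix w
    have "\<bar>?D w\<bar> \<le> (\<Sum>y\<in>Y. \<bar>j y * indicator (Cl y) w\<bar>)" by (rule sum_abs)
    also have "\<dots> \<le> (\<Sum>y\<in>Y. \<bar>j y\<bar>)" by (intro sum_mono) (auto simp: indicator_def)
    finally show "\<bar>?D w\<bar> \<le> (\<Sum>y\<in>Y. \<bar>j y\<bar>)" .
  qed
  have vb: "\<bar>v z\<bar> \<le> 1" for z using v01[of z] by (auto simp: abs_le_iff)
  have sumK: "(\<Sum>y\<in>Y. j y * Kop a (indicator (Cl y)) x) = Kop a ?D x"
  proof -
    have "Kop a ?D x = (\<Sum>y\<in>Y. Kop a (\<lambda>w. j y * indicator (Cl y) w) x)"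
    proof (rule Kop_sum[OF fY])
      fix y assume "y \<in> Y"
      then show "(\<lambda>w. j y * indicator (Cl y) w) \<in> borel_measurable borel"
        by (rule borel_measurable_times[OF borel_measurable_const im])
      fix z show "\<bar>j y * indicator (Cl y) z\<bar> \<le> \<bar>j y\<bar>" by (simp add: indicator_def)
    qed
    then show ?thesis by (simp add: Kop_cmult)
  qed
  let ?c0 = "L * beta + E"
  have pw: "\<bar>v (x + s *\<^sub>R a) - ?D (x + s *\<^sub>R a)\<bar> \<le> ?c0 + indicator {s. r < \<bar>s\<bar>} s" for s
  proof (cases "x + s *\<^sub>R a \<in> H")
    case True
    with cov obtain y where y: "y \<in> Y" "x + s *\<^sub>R a \<in> Cl y" by auto
    have "?D (x + s *\<^sub>R a) = (\<Sum>y'\<in>Y. if y' = y then j y else 0)"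
    proof (rule sum.cong[OF refl])
      fix y' assume "y' \<in> Y"
      then show "j y' * indicator (Cl y') (x + s *\<^sub>R a) = (if y' = y then j y else 0)"
        using disj y by (auto simp: indicator_def)
    qed
    also have "\<dots> = j y" using y fY by simp
    finally have Dy: "?D (x + s *\<^sub>R a) = j y" .
    have "\<bar>v (x + s *\<^sub>R a) - j y\<bar> \<le> \<bar>v (x + s *\<^sub>R a) - v y\<bar> + \<bar>v y - j y\<bar>" by linarith
    also have "\<dots> \<le> L * beta + E"
    proof (rule add_mono)
      have "\<bar>v (x + s *\<^sub>R a) - v y\<bar> \<le> L * norm (x + s *\<^sub>R a - y)" by (rule vl)
      also have "\<dots> \<le> L * beta" using diam y nn by (intro mult_left_mono) auto
      finally show "\<bar>v (x + s *\<^sub>R a) - v y\<bar> \<le> L * beta" .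
      show "\<bar>v y - j y\<bar> \<le> E" using E y by auto
    qed
    finally show ?thesis using Dy by (simp add: indicator_def)
  next
    case False
    then have D0: "?D (x + s *\<^sub>R a) = 0" using cov by (intro sum.neutral) (auto simp: indicator_def)
    have "r < \<bar>s\<bar>" using out False by blast
    then have i1: "indicator {s. r < \<bar>s\<bar>} s = (1::real)" by simp
    have v1: "\<bar>v (x + s *\<^sub>R a) - ?D (x + s *\<^sub>R a)\<bar> \<le> 1" using D0 vb[of "x + s *\<^sub>R a"] by simp
    have "0 \<le> L * beta" using nn by simp
    then show ?thesis using i1 v1 nn by linarith
  qed
  have int1: "integrable lborel (\<lambda>s. ?c0 * std_normal_density s)" by simp
  have int2: "integrable lborel (\<lambda>s. indicator {s. r < \<bar>s\<bar>} s * std_normal_density s)"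
    by (rule int_le_phi) (auto simp: indicator_def)
  have dm: "(\<lambda>w. v w - ?D w) \<in> borel_measurable borel" using vm Dm by (rule borel_measurable_diff)
  have db: "\<bar>v w - ?D w\<bar> \<le> 1 + (\<Sum>y\<in>Y. \<bar>j y\<bar>)" for w
    using abs_triangle_ineq4[of "v w" "?D w"] vb[of w] Db[of w] by linarith
  have "Kop a v x - (\<Sum>y\<in>Y. j y * Kop a (indicator (Cl y)) x) = Kop a (\<lambda>w. v w - ?D w) x"
    unfolding sumK by (rule Kop_diff[OF vm Dm vb Db])
  also have "\<bar>\<dots>\<bar> \<le> (\<integral>s. norm ((v (x + s *\<^sub>R a) - ?D (x + s *\<^sub>R a)) * std_normal_density s) \<partial>lborel)"
    unfolding Kop_def by (rule abs_int_le)
  also have "\<dots> \<le> (\<integral>s. ?c0 * std_normal_density s + indicator {s. r < \<bar>s\<bar>} s * std_normal_density s \<partial>lborel)"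
  proof (rule integral_mono)
    show "integrable lborel (\<lambda>s. norm ((v (x + s *\<^sub>R a) - ?D (x + s *\<^sub>R a)) * std_normal_density s))"
      using Kop_integrable[OF dm db, of x a] by (rule integrable_norm)
    show "integrable lborel (\<lambda>s. ?c0 * std_normal_density s + indicator {s. r < \<bar>s\<bar>} s * std_normal_density s)"
      using int1 int2 by (rule Bochner_Integration.integrable_add)
    fix s
    have "norm ((v (x + s *\<^sub>R a) - ?D (x + s *\<^sub>R a)) * std_normal_density s)
        = \<bar>v (x + s *\<^sub>R a) - ?D (x + s *\<^sub>R a)\<bar> * std_normal_density s" by (simp add: abs_mult)
    also have "\<dots> \<le> (?c0 + indicator {s. r < \<bar>s\<bar>} s) * std_normal_density s"
      by (rule mult_right_mono[OF pw]) simp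
    finally show "norm ((v (x + s *\<^sub>R a) - ?D (x + s *\<^sub>R a)) * std_normal_density s)
        \<le> ?c0 * std_normal_density s + indicator {s. r < \<bar>s\<bar>} s * std_normal_density s"
      by (simp add: algebra_simps)
  qed
  also have "\<dots> = ?c0 + (\<integral>s. indicator {s. r < \<bar>s\<bar>} s * std_normal_density s \<partial>lborel)"
    using int1 int2 by (simp add: Bochner_Integration.integral_add)
  also have "\<dots> \<le> ?c0 + tau" using tail by simp
  finally show ?thesis .
qed

lemma bp_sub:
  assumes bp: "beta_partition H beta Gam X" and y: "y \<in> Gam" shows "y \<in> H"
proof -
  have "y \<in> X y" using bp y unfolding beta_partition_def by simp
  moreover have "(\<Union>y\<in>Gam. X y) = H" using bp unfolding beta_partition_def by simp
  ultimately show ?thesis using y by auto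
qed

lemma bp_pre:
  assumes bp: "beta_partition H beta Gam X" and y: "y \<in> Gam"
  shows "proj_preimage H Gam X y = X y"
proof -
  have yin: "\<forall>y\<in>Gam. y \<in> X y" and disj: "\<forall>y\<in>Gam. \<forall>z\<in>Gam. y \<noteq> z \<longrightarrow> X y \<inter> X z = {}"
    and cov: "(\<Union>y\<in>Gam. X y) = H" using bp unfolding beta_partition_def by auto
  have the: "partition_proj Gam X z = y1" if "y1 \<in> Gam" "z \<in> X y1" for z y1
    unfolding partition_proj_def
  proof (rule the_equality)
    show "y1 \<in> Gam \<and> z \<in> X y1" using that by simp
    fix y2 assume "y2 \<in> Gam \<and> z \<in> X y2"
    then show "y2 = y1" using disj that by blast
  qed
  show ?thesis
  proof
    show "proj_preimage H Gam X y \<subseteq> X y"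
    proof
      fix z assume "z \<in> proj_preimage H Gam X y"
      then have z: "z \<in> H" "partition_proj Gam X z = y" unfolding proj_preimage_def by auto
      then obtain y' where y': "y' \<in> Gam" "z \<in> X y'" using cov by auto
      then have "y' = y" using the[OF y'] z by simp
      then show "z \<in> X y" using y' by simp
    qed
    show "X y \<subseteq> proj_preimage H Gam X y"
    proof
      fix z assume z: "z \<in> X y"
      then have "z \<in> H" using cov y by auto
      then show "z \<in> proj_preimage H Gam X y" unfolding proj_preimage_def using the[OF y z] by simp
    qed
  qed
qed

lemma tau_bound:
  assumes l: "lam > 1" and M2: "M2 > 0" and sM: "sqrt M2 \<le> Mabs" and m: "1 \<le> (m::real)"
  shows "2 * std_normal_density (sqrt (2 * ln lam) / sqrt M2) / (sqrt (2 * ln lam) / sqrt M2)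
         \<le> sqrt 2 * m * Mabs / sqrt (ln lam) * (1 / lam) powr (1 / M2)"
proof -
  define q where "q = sqrt (ln lam)"
  define P where "P = (1 / lam) powr (1 / M2)"
  define s where "s = sqrt M2"
  have lnpos: "ln lam > 0" using l by simp
  have q: "q > 0" using lnpos by (simp add: q_def)
  have s: "s > 0" using M2 by (simp add: s_def)
  have P0: "P \<ge> 0" by (simp add: P_def)
  have c: "sqrt (2 * ln lam) = sqrt 2 * q" by (simp add: q_def real_sqrt_mult)
  have sq2: "sqrt 2 * sqrt 2 = (2::real)" by simp
  have r2: "(sqrt 2 * q / s)\<^sup>2 = 2 * ln lam / M2"
    using lnpos M2 by (simp add: power_divide power_mult_distrib q_def s_def)
  have "exp (- (sqrt 2 * q / s)\<^sup>2 / 2) = exp ((1 / M2) * ln (1 / lam))"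
    unfolding r2 using l by (simp add: ln_div)
  also have "\<dots> = P" unfolding P_def powr_def using l by simp
  finally have e: "exp (- (sqrt 2 * q / s)\<^sup>2 / 2) = P" .
  have sp: "sqrt (2 * pi) = sqrt 2 * sqrt pi" by (simp add: real_sqrt_mult)
  have pi1: "1 \<le> sqrt pi" using pi_gt3 by (intro real_le_rsqrt) simp
  have "2 * std_normal_density (sqrt (2 * ln lam) / sqrt M2) / (sqrt (2 * ln lam) / sqrt M2)
      = 2 * ((1 / (sqrt 2 * sqrt pi)) * P) / (sqrt 2 * q / s)"
    unfolding std_normal_density_def c sp e[symmetric] s_def by simp
  also have "\<dots> = P * s / (sqrt pi * q)"
    using q s pi1 by (simp add: field_simps sq2)
  also have "\<dots> \<le> P * s / q"
    using q s pi1 P0 by (intro divide_left_mono mult_nonneg_nonneg) (auto intro: mult_right_mono[of 1, simplified])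
  also have "\<dots> \<le> P * (sqrt 2 * m * Mabs) / q"
  proof -
    have sM': "s \<le> Mabs" using sM by (simp add: s_def)
    have k: "1 \<le> sqrt 2 * m" using mult_mono[of 1 "sqrt 2" 1 m] m by simp
    have "Mabs = 1 * Mabs" by simp
    also have "\<dots> \<le> (sqrt 2 * m) * Mabs" using k sM' s by (intro mult_right_mono) auto
    finally have "s \<le> sqrt 2 * m * Mabs" using sM' by simp
    then show ?thesis using q P0 by (intro divide_right_mono mult_left_mono) auto
  qed
  also have "\<dots> = sqrt 2 * m * Mabs / sqrt (ln lam) * (1 / lam) powr (1 / M2)"
    by (simp add: P_def q_def)
  finally show ?thesis .
qed

theorem corollary4:
  fixes A :: "'m::finite \<Rightarrow> nat \<Rightarrow> real"
    and b :: "real^'m"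
    and T :: nat
    and lam beta :: real
    and Gam :: "nat \<Rightarrow> (real^'m) set"
    and X :: "nat \<Rightarrow> real^'m \<Rightarrow> (real^'m) set"
    and J :: "nat \<Rightarrow> real^'m \<Rightarrow> real"
  assumes T_pos: "T \<ge> 1"
    and aT_nz: "\<forall>i. A i (T - 1) \<noteq> 0"
    and lam: "lam > 1"
    and beta: "beta > 0"
    and part: "\<forall>t\<le>T. beta_partition (Hbox lam t) beta (Gam t) (X t)"
    and meas: "\<forall>t\<le>T. \<forall>y\<in>Gam t. X t y \<in> sets borel"
    and J_T: "\<forall>x\<in>Gam T. J T x = gsmooth lam b x"
    and J_step: "\<forall>t<T. \<forall>x\<in>Gam t. J t x =
        (\<Sum>y\<in>Gam (Suc t). J (Suc t) y *
           Qker A t (proj_preimage (Hbox lam (Suc t)) (Gam (Suc t)) (X (Suc t)) y) x)"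
  shows "\<bar>(\<integral>x. indicator (polyhedron A b T) x * std_normal_density_T T x
                \<partial>(PiM {..<T} (\<lambda>_. lborel))) - J 0 0\<bar>
    \<le> 2 * real CARD('m) / (lam * Min (range (\<lambda>i. \<bar>A i (T - 1)\<bar>)))
      + sqrt 2 * real CARD('m) * real T * Max {\<bar>A i t\<bar> | i t. t < T} / sqrt (ln lam)
          * (1 / lam) powr (1 / Max {(A i t)\<^sup>2 | i t. t < T})
      + 2 * real CARD('m) * lam * beta * real (T + 1)"
proof -
  define a where "a = (\<lambda>t. column A t)"
  have acomp: "\<And>t i. a t $ i = A i t" by (simp add: a_def column_def)
  have l0: "lam > 0" using lam by simp
  define h1 where "h1 = (indicator {z::real^'m. \<forall>i. z$i < b$i} :: real^'m \<Rightarrow> real)"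
  define g where "g = gsmooth lam b"
  define L where "L = lam * real CARD('m)"
  have h1m: "h1 \<in> borel_measurable borel" unfolding h1_def by (rule h1_meas)
  have h1b: "\<And>z. \<bar>h1 z\<bar> \<le> 1" by (simp add: h1_def indicator_def)
  have gm: "g \<in> borel_measurable borel" unfolding g_def by (rule gsmooth_meas[OF l0])
  have gb: "\<bar>g z\<bar> \<le> 1" for z using gsmooth_range[OF l0, of b z] by (auto simp: abs_le_iff g_def)
  have g0: "0 \<le> g z" for z using gsmooth_range[OF l0, of b z] by (simp add: g_def)
  have gl: "\<bar>g u - g v\<bar> \<le> L * norm (u - v)" for u v
    unfolding g_def L_def by (rule gsmooth_lip[OF l0])
  have L0: "0 \<le> L" using l0 by (simp add: L_def)
  have m1: "1 \<le> real CARD('m)" by simp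
  have comp: "(\<Sum>t<T. y t *\<^sub>R a t) $ i = (\<Sum>t<T. A i t * y t)" for y i
    by (simp add: acomp mult.commute)
  have "(\<integral>x. indicator (polyhedron A b T) x * std_normal_density_T T x \<partial>(PiM {..<T} (\<lambda>_. lborel)))
      = (\<integral>y. h1 (0 + (\<Sum>t<T. y t *\<^sub>R a t)) * (\<Prod>t<T. std_normal_density (y t)) \<partial>(PiM {..<T} (\<lambda>_. lborel)))"
  proof (rule Bochner_Integration.integral_cong[OF refl])
    fix y :: "nat \<Rightarrow> real"
    have "indicator (polyhedron A b T) y = h1 (0 + (\<Sum>t<T. y t *\<^sub>R a t))"
      unfolding h1_def polyhedron_def indicator_def using comp by simp
    then show "indicator (polyhedron A b T) y * std_normal_density_T T y
        = h1 (0 + (\<Sum>t<T. y t *\<^sub>R a t)) * (\<Prod>t<T. std_normal_density (y t))"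
      by (simp add: std_normal_density_T_def)
  qed
  also have "\<dots> = Kr a 0 T h1 0" by (rule G_lemma[OF h1m h1b])
  finally have P_eq: "(\<integral>x. indicator (polyhedron A b T) x * std_normal_density_T T x \<partial>(PiM {..<T} (\<lambda>_. lborel))) = Kr a 0 T h1 0" .
  obtain T' where T': "T = Suc T'" using T_pos by (cases T) auto
  define Mn where "Mn = Min (range (\<lambda>i. \<bar>A i (T - 1)\<bar>))"
  have Mnpos: "0 < Mn" unfolding Mn_def
    using Min_in[of "range (\<lambda>i. \<bar>A i (T - 1)\<bar>)"] aT_nz by auto
  have sm: "\<bar>Kop (a T') h1 z - Kop (a T') g z\<bar> \<le> real CARD('m) / (lam * Mn)" for z
  proof -
    have anz: "\<And>i. a T' $ i \<noteq> 0" using aT_nz T' by (simp add: acomp)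
    have "range (\<lambda>i. \<bar>a T' $ i\<bar>) = range (\<lambda>i. \<bar>A i (T - 1)\<bar>)" using T' by (simp add: acomp)
    then show ?thesis using smooth_bound[OF l0 anz, of b z] by (simp add: h1_def g_def Mn_def)
  qed
  have e1: "\<bar>Kr a 0 T h1 0 - Kr a 0 T g 0\<bar> \<le> real CARD('m) / (lam * Mn)"
  proof -
    have "Kr a 0 T h1 0 = Kr a 0 T' (Kop (a T') h1) 0" using Kr_swap[of a 0 T' h1] T' by simp
    moreover have "Kr a 0 T g 0 = Kr a 0 T' (Kop (a T') g) 0" using Kr_swap[of a 0 T' g] T' by simp
    ultimately show ?thesis
      using Kr_diffbound[OF Kop_measurable[OF h1m] Kop_measurable[OF gm] Kop_bound[OF h1m h1b]
          Kop_bound[OF gm gb] sm] by simp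
  qed
  define V where "V t = Kr a t (T - t) g" for t
  have Vm: "V t \<in> borel_measurable borel" for t using Kr_props[OF gm gb] by (simp add: V_def)
  have V01: "0 \<le> V t z \<and> V t z \<le> 1" for t z
    using Kr_props[OF gm gb, of a t "T - t"] Kr_nonneg[OF gm gb g0, of a t "T - t" z]
    by (auto simp: V_def abs_le_iff)
  have Vl: "\<bar>V t u - V t w\<bar> \<le> L * norm (u - w)" for t u w
    unfolding V_def by (rule Kr_lip[OF gm gb gl])
  have Vstep: "V t = Kop (a t) (V (Suc t))" if "t < T" for t
  proof -
    have "T - t = Suc (T - Suc t)" using that by simp
    then show ?thesis by (simp add: V_def)
  qed
  define S2 where "S2 = {(A i t)\<^sup>2 | i t. t < T}"
  define Sa where "Sa = {\<bar>A i t\<bar> | i t. t < T}"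
  have S2fin: "finite S2"
  proof (rule finite_subset)
    show "S2 \<subseteq> (\<lambda>p. (A (fst p) (snd p))\<^sup>2) ` (UNIV \<times> {..<T})" unfolding S2_def by force
  qed simp
  have Safin: "finite Sa"
  proof (rule finite_subset)
    show "Sa \<subseteq> (\<lambda>p. \<bar>A (fst p) (snd p)\<bar>) ` (UNIV \<times> {..<T})" unfolding Sa_def by force
  qed simp
  obtain i0 :: 'm where True by blast
  have Tm1: "T - 1 < T" using T_pos by simp
  have S2ne: "S2 \<noteq> {}" unfolding S2_def using Tm1 by blast
  define M2 where "M2 = Max S2"
  define Mabs where "Mabs = Max Sa"
  have M2ge: "(A i t)\<^sup>2 \<le> M2" if "t < T" for i t
    unfolding M2_def by (rule Max_ge[OF S2fin]) (use that in \<open>auto simp: S2_def\<close>)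
  have M2pos: "0 < M2"
  proof -
    have "0 < (A i0 (T - 1))\<^sup>2" using aT_nz by simp
    then show ?thesis using M2ge[OF Tm1, of i0] by linarith
  qed
  have sM: "sqrt M2 \<le> Mabs"
  proof -
    have "M2 \<in> S2" unfolding M2_def using Max_in[OF S2fin S2ne] .
    then obtain i t where it: "t < T" "M2 = (A i t)\<^sup>2" unfolding S2_def by blast
    then have "sqrt M2 = \<bar>A i t\<bar>" by simp
    also have "\<dots> \<le> Mabs" unfolding Mabs_def by (rule Max_ge[OF Safin]) (use it in \<open>auto simp: Sa_def\<close>)
    finally show ?thesis .
  qed
  have Aabs: "\<bar>A i t\<bar> \<le> sqrt M2" if "t < T" for i t
    using real_sqrt_le_mono[OF M2ge[OF that, of i]] by simp
  define c where "c = sqrt (2 * ln lam)"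
  define r where "r = c / sqrt M2"
  have cpos: "0 < c" using lam by (simp add: c_def)
  have rpos: "0 < r" using cpos M2pos by (simp add: r_def)
  define tau where "tau = 2 * std_normal_density r / r"
  have tail: "(\<integral>s. indicator {s. r < \<bar>s\<bar>} s * std_normal_density s \<partial>lborel) \<le> tau"
    unfolding tau_def by (rule tail_real[OF rpos])
  have rM: "r * sqrt M2 = c" using M2pos by (simp add: r_def)
  define del where "del = L * beta + tau"
  have ind: "\<forall>x\<in>Gam (T - n). \<bar>V (T - n) x - J (T - n) x\<bar> \<le> real n * del" if "n \<le> T" for n
    using that
  proof (induction n)
    case 0
    show ?case using J_T by (simp add: V_def g_def)
  next
    case (Suc n)
    define t where "t = T - Suc n"
    have tT: "t < T" and St: "Suc t = T - n" using Suc.prems by (auto simp: t_def)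
    have IH: "\<forall>y\<in>Gam (Suc t). \<bar>V (Suc t) y - J (Suc t) y\<bar> \<le> real n * del"
      using Suc.IH Suc.prems St by simp
    have bp1: "beta_partition (Hbox lam (Suc t)) beta (Gam (Suc t)) (X (Suc t))"
      using part St by auto
    have bp0: "beta_partition (Hbox lam t) beta (Gam t) (X t)"
      using part tT by auto
    show ?case unfolding t_def[symmetric]
    proof
      fix x assume x: "x \<in> Gam t"
      have xH: "x \<in> Hbox lam t" by (rule bp_sub[OF bp0 x])
      have Jx: "J t x = (\<Sum>y\<in>Gam (Suc t). J (Suc t) y * Kop (a t) (indicator (X (Suc t) y)) x)"
      proof -
        have "J t x = (\<Sum>y\<in>Gam (Suc t). J (Suc t) y *
           Qker A t (proj_preimage (Hbox lam (Suc t)) (Gam (Suc t)) (X (Suc t)) y) x)"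
          using J_step tT x by blast
        also have "\<dots> = (\<Sum>y\<in>Gam (Suc t). J (Suc t) y * Kop (a t) (indicator (X (Suc t) y)) x)"
        proof (rule sum.cong[OF refl])
          fix y assume "y \<in> Gam (Suc t)"
          then show "J (Suc t) y * Qker A t (proj_preimage (Hbox lam (Suc t)) (Gam (Suc t)) (X (Suc t)) y) x
              = J (Suc t) y * Kop (a t) (indicator (X (Suc t) y)) x"
            using bp_pre[OF bp1] by (simp add: Qker_def Kop_def a_def)
        qed
        finally show ?thesis .
      qed
      have bpd: "finite (Gam (Suc t))" "\<forall>y\<in>Gam (Suc t). \<forall>y'\<in>Gam (Suc t). y \<noteq> y' \<longrightarrow> X (Suc t) y \<inter> X (Suc t) y' = {}"
        "(\<Union>y\<in>Gam (Suc t). X (Suc t) y) = Hbox lam (Suc t)"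
        "\<forall>y\<in>Gam (Suc t). \<forall>w\<in>X (Suc t) y. norm (w - y) \<le> beta"
        using bp1 unfolding beta_partition_def by auto
      have cm: "\<forall>y\<in>Gam (Suc t). X (Suc t) y \<in> sets borel" using meas St by auto
      have del0: "0 \<le> del" unfolding del_def tau_def using L0 beta rpos by simp
      have out: "r < \<bar>s\<bar>" if ns: "x + s *\<^sub>R a t \<notin> Hbox lam (Suc t)" for s
      proof (rule ccontr)
        assume "\<not> r < \<bar>s\<bar>"
        then have sr: "\<bar>s\<bar> \<le> r" by simp
        have "x + s *\<^sub>R a t \<in> Hbox lam (Suc t)"
          unfolding Hbox_def
        proof (intro CollectI allI)
          fix i
          have xi: "\<bar>x $ i\<bar> \<le> real t * c" using xH by (simp add: Hbox_def c_def)
          have "\<bar>s * A i t\<bar> \<le> r * sqrt M2"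
            unfolding abs_mult using sr Aabs[OF tT, of i] rpos by (intro mult_mono) auto
          then have "\<bar>s * A i t\<bar> \<le> c" using rM by simp
          then have "\<bar>x $ i + s * A i t\<bar> \<le> real t * c + c" using xi by linarith
          then show "\<bar>(x + s *\<^sub>R a t) $ i\<bar> \<le> real (Suc t) * sqrt (2 * ln lam)"
            by (simp add: acomp c_def algebra_simps)
        qed
        with ns show False by simp
      qed
      have "\<bar>Kop (a t) (V (Suc t)) x - (\<Sum>y\<in>Gam (Suc t). J (Suc t) y * Kop (a t) (indicator (X (Suc t) y)) x)\<bar>
          \<le> L * beta + real n * del + tau"
        by (rule step_bound[OF bpd(1) bpd(2) bpd(3) cm bpd(4) Vm V01 Vl IH L0 _ _ out tail])
           (use beta del0 in auto)
      then show "\<bar>V t x - J t x\<bar> \<le> real (Suc n) * del"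
        using Vstep[OF tT] Jx by (simp add: del_def algebra_simps)
    qed
  qed
  have G0: "(0::real^'m) \<in> Gam 0"
  proof -
    have bp: "beta_partition (Hbox lam 0) beta (Gam 0) (X 0)" using part by auto
    have "0 \<in> Hbox lam 0" by (simp add: Hbox_def)
    moreover have "(\<Union>y\<in>Gam 0. X 0 y) = Hbox lam 0" using bp unfolding beta_partition_def by simp
    ultimately have "0 \<in> (\<Union>y\<in>Gam 0. X 0 y)" by simp
    then obtain y where y: "y \<in> Gam 0" "0 \<in> X 0 y" by blast
    have "y \<in> Hbox lam 0" by (rule bp_sub[OF bp y(1)])
    then have "y = 0" by (simp add: Hbox_def vec_eq_iff)
    then show ?thesis using y by simp
  qed
  have e2: "\<bar>Kr a 0 T g 0 - J 0 0\<bar> \<le> real T * del"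
    using ind[of T] G0 by (simp add: V_def)
  have tauB: "tau \<le> sqrt 2 * real CARD('m) * Mabs / sqrt (ln lam) * (1 / lam) powr (1 / M2)"
    unfolding tau_def r_def c_def by (rule tau_bound[OF lam M2pos sM m1])
  have t1: "real CARD('m) / (lam * Mn) \<le> 2 * real CARD('m) / (lam * Mn)"
    using l0 Mnpos by (simp add: divide_right_mono)
  have t2: "real T * tau \<le> sqrt 2 * real CARD('m) * real T * Mabs / sqrt (ln lam) * (1 / lam) powr (1 / M2)"
  proof -
    have "real T * tau \<le> real T * (sqrt 2 * real CARD('m) * Mabs / sqrt (ln lam) * (1 / lam) powr (1 / M2))"
      using tauB by (intro mult_left_mono) auto
    also have "\<dots> = sqrt 2 * real CARD('m) * real T * Mabs / sqrt (ln lam) * (1 / lam) powr (1 / M2)"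
      by (simp add: algebra_simps)
    finally show ?thesis .
  qed
  have t3: "real T * (L * beta) \<le> 2 * real CARD('m) * lam * beta * real (T + 1)"
  proof -
    have "real T * (L * beta) = real CARD('m) * lam * beta * real T" by (simp add: L_def algebra_simps)
    also have "\<dots> \<le> 2 * real CARD('m) * lam * beta * real (T + 1)"
      using l0 beta by (intro mult_mono) auto
    finally show ?thesis .
  qed
  have "\<bar>Kr a 0 T h1 0 - J 0 0\<bar> \<le> real CARD('m) / (lam * Mn) + real T * del"
    using e1 e2 by linarith
  then show ?thesis
    unfolding P_eq Mn_def[symmetric]
    using t1 t2 t3 unfolding del_def M2_def[symmetric] Mabs_def[symmetric] S2_def[symmetric] Sa_def[symmetric]
    by (simp add: algebra_simps)
qed

end
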